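(* The variable $w(x,t)=u(x,t)-\kappa\left(p(x,t)\right)$, $x\in[0,1]$, where $p$ is the predictor state defined below, satisfies $$w_t(x,t)=v\left(u(x,t)\right)w_x(x,t),\qquad w(1,t)=0 .$$ Moreover, the ODE $\dot{X}(t)=f\left(X(t),u(0,t)\right)$ can be written as $$\dot{X}(t)=f\left(X(t),\kappa\left(X(t)\right)+w(0,t)\right).$$
   Context: Consider the PDE-ODE cascade $\dot{X}(t)=f\left(X(t),u(0,t)\right)$, $u_t(x,t)=v\left(u(x,t)\right)u_x(x,t)$, $u(1,t)=U(t)$, with $X\in\mathbb{R}^n$, $u\in\mathbb{R}$, $x\in[0,1]$, $t\geq0$, where $f:\mathbb{R}^n\times\mathbb{R}\to\mathbb{R}^n$ is continuously differentiable with $f(0,0)=0$, and $v:\mathbb{R}\to\mathbb{R}_+$ is twice continuously differentiable with $v(u)\geq\underline{v}>0$ for all $u$. Let $\kappa:\mathbb{R}^n\to\mathbb{R}$ be a twice continuously differentiable feedback law with $\kappa(0)=0$ (rendering $\dot X=f(X,\kappa(X)+\omega)$ input-to-state stable with respect to $\omega$). The system is in closed loop with the control $U(t)=\kappa\left(p(1,t)\right)$, where the predictor state is $$p(x,t)=X(t)+\int_0^{x}f\left(p(y,t),u(y,t)\right)\Gamma\left(u(y,t),u_y(y,t),y\right)dy,\quad x\in[0,1],$$ with $$\Gamma\left(u(x,t),u_x(x,t),x\right)=\frac{1}{v\left(u(x,t)\right)}-\frac{x\,v'\left(u(x,t)\right)u_x(x,t)}{v\left(u(x,t)\right)^2}.$$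 Solutions are assumed to satisfy the feasibility condition $-M<\frac{v'(u(x,t))u_x(x,t)}{v(u(x,t))}<1$ for all $x\in[0,1]$, $t\geq0$, for some $M>0$, so that $p$ is well defined. *)

theory Defs
  imports "HOL-Analysis.Analysis"
begin

text \<open>The weight Gamma(u, u_x, x) = 1/v(u) - x v'(u) u_x / v(u)^2.\<close>
definition Gam :: "(real \<Rightarrow> real) \<Rightarrow> real \<Rightarrow> real \<Rightarrow> real \<Rightarrow> real" where
  "Gam v a b x = 1 / v a - x * deriv v a * b / (v a)^2"

definition class_K :: "(real \<Rightarrow> real) \<Rightarrow> bool" where
  "class_K \<gamma> \<longleftrightarrow> continuous_on {0..} \<gamma> \<and> \<gamma> 0 = 0 \<and> strict_mono_on {0..} \<gamma>"

definition class_KL :: "(real \<Rightarrow> real \<Rightarrow> real) \<Rightarrow> bool" where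
  "class_KL \<beta> \<longleftrightarrow> continuous_on ({0..} \<times> {0..}) (\<lambda>(s,t). \<beta> s t)
     \<and> (\<forall>t\<ge>0. class_K (\<lambda>s. \<beta> s t))
     \<and> (\<forall>s\<ge>0. (\<forall>t1 t2. 0 \<le> t1 \<and> t1 \<le> t2 \<longrightarrow> \<beta> s t2 \<le> \<beta> s t1)
                \<and> ((\<lambda>t. \<beta> s t) \<longlongrightarrow> 0) at_top)"

definition ISS :: "('x::real_normed_vector \<Rightarrow> real \<Rightarrow> 'x) \<Rightarrow> bool" where
  "ISS F \<longleftrightarrow> (\<exists>\<beta> \<gamma>. class_KL \<beta> \<and> class_K \<gamma> \<and>
     (\<forall>Y \<omega>. continuous_on {0..} \<omega> \<and>
        (\<forall>t\<ge>0. (Y has_vector_derivative F (Y t) (\<omega> t)) (at t within {0..}))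
        \<longrightarrow> (\<forall>t\<ge>0. norm (Y t) \<le> \<beta> (norm (Y 0)) t + \<gamma> (Sup ((\<lambda>s. \<bar>\<omega> s\<bar>) ` {0..t})))))"

end

theory Submission
  imports Defs
begin

lemma gronwall01:
  fixes \<phi> :: "real \<Rightarrow> real" and a b L :: real
  assumes b: "0 \<le> b" "b \<le> 1" and L: "0 \<le> L" and a: "0 \<le> a"
    and cont: "continuous_on {0..b} \<phi>"
    and le: "\<And>y. y \<in> {0..b} \<Longrightarrow> \<phi> y \<le> a + L * integral {0..y} \<phi>"
    and y: "y \<in> {0..b}"
  shows "\<phi> y \<le> a * (1 + L * exp L)"
proof -
  define I where "I y = integral {0..y} \<phi>" for y
  have dI: "(I has_real_derivative \<phi> x) (at x within {0..b})" if "x \<in> {0..b}" for x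
    unfolding I_def by (rule integral_has_real_derivative[OF cont that])
  define H where "H x = exp (- L * x) * I x - a * x" for x
  have contI: "continuous_on {0..b} I"
    unfolding I_def by (rule indefinite_integral_continuous_1[OF integrable_continuous_real[OF cont]])
  have contH: "continuous_on {0..y} H"
    unfolding H_def using y
    by (intro continuous_intros continuous_on_subset[OF contI]) auto
  have "H y \<le> H 0"
  proof (rule DERIV_nonpos_imp_decreasing_open[of 0 y H])
    show "0 \<le> y" using y by auto
    show "continuous_on {0..y} H" by fact
    fix x assume x: "0 < x" "x < y"
    have xb: "x \<in> {0..b}" using x y by auto
    have d1: "(I has_real_derivative \<phi> x) (at x)"
      using dI[OF xb] at_within_Icc_at[of 0 x b] x y by auto
    have dH: "(H has_real_derivative (- L * exp (- L * x) * I x + exp (- L * x) * \<phi> x - a)) (at x)"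
      unfolding H_def
      by (rule derivative_eq_intros d1 refl | simp)+
    have "\<phi> x \<le> a + L * I x" using le[OF xb] by (simp add: I_def)
    hence "exp (- L * x) * \<phi> x \<le> exp (- L * x) * (a + L * I x)" by simp
    moreover have "exp (- L * x) * a \<le> a"
    proof -
      have "exp (- L * x) \<le> 1" using L x by simp
      thus ?thesis using a by (simp add: mult_left_le_one_le mult.commute mult_right_le_one_le)
    qed
    ultimately have "- L * exp (- L * x) * I x + exp (- L * x) * \<phi> x - a \<le> 0"
      by (simp add: algebra_simps)
    thus "\<exists>d. (H has_real_derivative d) (at x) \<and> d \<le> 0" using dH by blast
  qed
  hence "exp (- L * y) * I y \<le> a * y" by (simp add: H_def I_def)
  hence "I y \<le> a * y * exp (L * y)"
    by (simp add: exp_minus field_simps)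
  also have "\<dots> \<le> a * 1 * exp L"
    using y a L b by (intro mult_mono) (auto intro: mult_left_le_one_le mult_right_le_one_le)
  finally have "I y \<le> a * exp L" by simp
  hence "\<phi> y \<le> a + L * (a * exp L)" using le[OF y] L
    by (smt (verit) I_def mult_left_mono)
  thus ?thesis by (simp add: algebra_simps)
qed

lemma first_exit:
  fixes \<phi> :: "real \<Rightarrow> real"
  assumes cont: "continuous_on {0..1} \<phi>" and r0: "\<phi> 0 < r"
    and step: "\<And>b. b \<in> {0..1} \<Longrightarrow> (\<forall>y\<in>{0..b}. \<phi> y \<le> r) \<Longrightarrow> (\<forall>y\<in>{0..b}. \<phi> y < r)"
  shows "\<forall>y\<in>{0..1}. \<phi> y < r"
proof (rule ccontr)
  assume neg: "\<not> ?thesis"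
  define S where "S = {0..1} \<inter> \<phi> -` {r..}"
  have ne: "S \<noteq> {}" using neg by (auto simp: S_def)
  have cl: "closed S" unfolding S_def
    by (rule continuous_closed_preimage[OF cont]) auto
  have bdd: "bdd_below S" by (auto simp: S_def bdd_below_def)
  define m where "m = Inf S"
  have mS: "m \<in> S" unfolding m_def by (rule closed_contains_Inf[OF ne bdd cl])
  have below: "\<phi> y < r" if "y \<in> {0..1}" "y < m" for y
  proof (rule ccontr)
    assume "\<not> \<phi> y < r"
    hence "y \<in> S" using that by (auto simp: S_def)
    hence "m \<le> y" unfolding m_def using bdd by (rule cInf_lower)
    thus False using that by auto
  qed
  have m01: "0 \<le> m" "m \<le> 1" using mS by (auto simp: S_def)
  have rm: "r \<le> \<phi> m" using mS by (auto simp: S_def)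
  obtain z where z: "0 \<le> z" "z \<le> m" "\<phi> z = r"
    using IVT'[of \<phi> 0 r m] r0 rm m01 continuous_on_subset[OF cont, of "{0..m}"] by auto
  have "z = m"
  proof (rule ccontr)
    assume "z \<noteq> m" hence "z < m" using z by auto
    thus False using below[of z] z m01 by auto
  qed
  hence "\<forall>y\<in>{0..m}. \<phi> y \<le> r" using below m01 z by (auto simp: less_eq_real_def)
  hence "\<forall>y\<in>{0..m}. \<phi> y < r" using step[of m] m01 by auto
  thus False using rm m01 by (meson atLeastAtMost_iff less_le_not_le order_refl)
qed

lemma unif_diff:
  fixes \<phi> \<phi>t :: "real \<Rightarrow> real \<Rightarrow> real" and t0 e :: real
  assumes d: "\<And>y s. y \<in> {0..1} \<Longrightarrow> 0 \<le> s \<Longrightarrow> ((\<lambda>s. \<phi> y s) has_real_derivative \<phi>t y s) (at s within {0..})"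
    and c: "continuous_on ({0..1} \<times> {0..}) (\<lambda>(y,s). \<phi>t y s)"
    and t0: "0 \<le> t0" and e: "e > 0"
  shows "\<exists>\<delta>>0. \<forall>t\<ge>0. \<bar>t - t0\<bar> < \<delta> \<longrightarrow> (\<forall>y\<in>{0..1}. \<bar>\<phi> y t - \<phi> y t0 - (t - t0) * \<phi>t y t0\<bar> \<le> e * \<bar>t - t0\<bar>)"
proof -
  define C where "C = {0..1::real} \<times> {0..t0+1}"
  have "compact C" unfolding C_def by (intro compact_Times compact_Icc)
  moreover have "continuous_on C (\<lambda>(y,s). \<phi>t y s)"
    by (rule continuous_on_subset[OF c]) (auto simp: C_def)
  ultimately have uc: "uniformly_continuous_on C (\<lambda>(y,s). \<phi>t y s)"
    by (simp add: compact_uniformly_continuous)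
  then obtain d0 where d0: "d0 > 0" and
    d0': "\<And>p q. p \<in> C \<Longrightarrow> q \<in> C \<Longrightarrow> dist q p < d0 \<Longrightarrow> dist ((\<lambda>(y,s). \<phi>t y s) q) ((\<lambda>(y,s). \<phi>t y s) p) < e"
    unfolding uniformly_continuous_on_def using e by metis
  show ?thesis
  proof (intro exI[of _ "min d0 1"] conjI allI impI ballI)
    show "0 < min d0 1" using d0 by auto
    fix t y :: real assume t: "0 \<le> t" and tt: "\<bar>t - t0\<bar> < min d0 1" and y: "y \<in> {0..1}"
    define S where "S = closed_segment t0 t"
    have SC: "s \<in> {0..t0+1}" if "s \<in> S" for s
      using that t t0 tt by (auto simp: S_def closed_segment_eq_real_ivl split: if_splits)
    have Sd: "\<bar>s - t0\<bar> \<le> \<bar>t - t0\<bar>" if "s \<in> S" for s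
      using that by (auto simp: S_def closed_segment_eq_real_ivl split: if_splits)
    have der: "((\<lambda>s. \<phi> y s - s * \<phi>t y t0) has_derivative (*) (\<phi>t y s - \<phi>t y t0)) (at s within S)"
      if "s \<in> S" for s
    proof -
      have "((\<lambda>s. \<phi> y s) has_real_derivative \<phi>t y s) (at s within S)"
        apply (rule DERIV_subset[OF d[OF y]])
        using SC[OF that] SC by force+
      hence "((\<lambda>s. \<phi> y s - s * \<phi>t y t0) has_real_derivative (\<phi>t y s - \<phi>t y t0)) (at s within S)"
        by (auto intro!: derivative_eq_intros)
      thus ?thesis by (simp add: has_field_derivative_def)
    qed
    have bnd: "onorm ((*) (\<phi>t y s - \<phi>t y t0)) \<le> e" if "s \<in> S" for s
    proof (rule onorm_le)
      fix h :: real
      have "dist ((\<lambda>(y,s). \<phi>t y s) (y,s)) ((\<lambda>(y,s). \<phi>t y s) (y,t0)) < e"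
        using d0'[of "(y,t0)" "(y,s)"] SC[OF that] y t0 Sd[OF that] tt
        by (auto simp: C_def dist_Pair_Pair dist_real_def)
      hence "\<bar>\<phi>t y s - \<phi>t y t0\<bar> \<le> e" by (simp add: dist_real_def)
      thus "norm ((\<phi>t y s - \<phi>t y t0) * h) \<le> e * norm h"
        by (simp add: abs_mult mult_right_mono)
    qed
    have "norm ((\<phi> y t - t * \<phi>t y t0) - (\<phi> y t0 - t0 * \<phi>t y t0)) \<le> e * norm (t - t0)"
      by (rule differentiable_bound[OF _ der bnd]) (auto simp: S_def)
    thus "\<bar>\<phi> y t - \<phi> y t0 - (t - t0) * \<phi>t y t0\<bar> \<le> e * \<bar>t - t0\<bar>"
      by (simp add: algebra_simps)
  qed
qed

lemma bnd_near:
  fixes g :: "'a::euclidean_space \<Rightarrow> 'b::real_normed_vector"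
  assumes c: "continuous_on UNIV g" and K: "compact K"
  shows "\<exists>M. \<forall>k\<in>K. \<forall>z. norm (z - k) \<le> 1 \<longrightarrow> norm (g z) \<le> M"
proof -
  obtain R where R: "\<And>k. k \<in> K \<Longrightarrow> norm k \<le> R"
    using compact_imp_bounded[OF K] unfolding bounded_iff by auto
  have "compact (g ` cball 0 (R+1))"
    by (rule compact_continuous_image[OF continuous_on_subset[OF c]]) auto
  then obtain M where M: "\<And>w. w \<in> g ` cball 0 (R+1) \<Longrightarrow> norm w \<le> M"
    using compact_imp_bounded[of "g ` cball 0 (R+1)"] unfolding bounded_iff by auto
  show ?thesis
  proof (intro exI ballI allI impI)
    fix k z assume k: "k \<in> K" and z: "norm (z - k) \<le> 1"
    have "norm z \<le> norm k + norm (z - k)" using norm_triangle_ineq[of k "z - k"] by simp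
    hence "z \<in> cball 0 (R+1)" using R[OF k] z by auto
    thus "norm (g z) \<le> M" using M by auto
  qed
qed
lemma linearize:
  fixes F :: "'a::euclidean_space \<Rightarrow> 'b::real_normed_vector" and F' :: "'a \<Rightarrow> 'a \<Rightarrow>\<^sub>L 'b"
  assumes dF: "\<And>z. (F has_derivative blinfun_apply (F' z)) (at z)"
    and cF': "continuous_on UNIV F'"
    and K: "compact K" and e: "e > 0"
  shows "\<exists>\<delta>>0. \<forall>k\<in>K. \<forall>z. norm (z - k) < \<delta> \<longrightarrow> norm (F z - F k - F' k (z - k)) \<le> e * norm (z - k)"
proof -
  obtain R where R: "\<And>k. k \<in> K \<Longrightarrow> norm k \<le> R"
    using compact_imp_bounded[OF K] unfolding bounded_iff by auto
  define B where "B = cball (0::'a) (R+1)"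
  have "uniformly_continuous_on B F'"
    using continuous_on_subset[OF cF'] by (simp add: compact_uniformly_continuous B_def)
  then obtain d0 where d0: "d0 > 0" and
    d0': "\<And>p q. p \<in> B \<Longrightarrow> q \<in> B \<Longrightarrow> dist q p < d0 \<Longrightarrow> dist (F' q) (F' p) < e"
    unfolding uniformly_continuous_on_def using e by metis
  show ?thesis
  proof (intro exI[of _ "min d0 1"] conjI ballI allI impI)
    show "0 < min d0 1" using d0 by auto
    fix k z assume k: "k \<in> K" and z: "norm (z - k) < min d0 1"
    define S where "S = ball k (min d0 1)"
    have SB: "w \<in> B" if "w \<in> S" for w
    proof -
      have "norm w \<le> norm k + norm (w - k)" using norm_triangle_ineq[of k "w - k"] by simp
      moreover have "norm (w - k) < 1" using that by (auto simp: S_def dist_norm norm_minus_commute)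
      ultimately show ?thesis using R[OF k] by (auto simp: B_def)
    qed
    have kB: "k \<in> B" using SB[of k] d0 by (auto simp: S_def)
    have der: "((\<lambda>w. F w - F' k w) has_derivative blinfun_apply (F' w - F' k)) (at w within S)" for w
    proof -
      have "(blinfun_apply (F' k) has_derivative blinfun_apply (F' k)) (at w within S)"
        by (rule bounded_linear_imp_has_derivative) (rule blinfun.bounded_linear_right)
      from has_derivative_diff[OF has_derivative_at_withinI[OF dF] this]
      show ?thesis by (simp add: blinfun.diff_left fun_diff_def minus_blinfun.rep_eq)
    qed
    have bnd: "onorm (blinfun_apply (F' w - F' k)) \<le> e" if "w \<in> S" for w
    proof -
      have "dist w k < d0" using that by (auto simp: S_def dist_commute)
      hence "dist (F' w) (F' k) < e" using d0'[OF kB SB[OF that]] by blast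
      thus ?thesis by (simp add: dist_norm norm_blinfun.rep_eq[symmetric])
    qed
    have zS: "z \<in> S" "k \<in> S" using z d0 by (auto simp: S_def dist_norm norm_minus_commute)
    have "norm ((F z - F' k z) - (F k - F' k k)) \<le> e * norm (z - k)"
      by (rule differentiable_bound[OF _ der bnd zS]) (simp add: S_def)
    thus "norm (F z - F k - F' k (z - k)) \<le> e * norm (z - k)"
      by (simp add: blinfun.diff_right algebra_simps)
  qed
qed

lemma slice:
  fixes h :: "real \<Rightarrow> real \<Rightarrow> 'b::topological_space"
  assumes "continuous_on ({0..1} \<times> {0..}) (\<lambda>(y,s). h y s)" "0 \<le> s"
  shows "continuous_on {0..1} (\<lambda>y. h y s)"
proof -
  have "continuous_on {0..1} ((\<lambda>(y,s). h y s) \<circ> (\<lambda>y. (y,s)))"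
    by (rule continuous_on_compose) (auto intro!: continuous_intros continuous_on_subset[OF assms(1)] simp: assms(2))
  thus ?thesis by (simp add: o_def)
qed

lemma bnd01:
  fixes h :: "real \<Rightarrow> 'b::real_normed_vector"
  assumes "continuous_on {0..1} h"
  shows "\<exists>M\<ge>0. \<forall>y\<in>{0..1}. norm (h y) \<le> M"
proof -
  have "compact (h ` {0..1})" by (rule compact_continuous_image[OF assms]) simp
  then obtain M where "\<And>w. w \<in> h ` {0..1} \<Longrightarrow> norm w \<le> M"
    using compact_imp_bounded[of "h ` {0..1}"] unfolding bounded_iff by auto
  thus ?thesis by (intro exI[of _ "max M 0"]) force
qed

lemma test_cont:
  fixes F' :: "'a::euclidean_space \<Rightarrow> 'a \<Rightarrow>\<^sub>L 'b::real_normed_vector"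
  assumes "continuous_on UNIV F'" "continuous_on S a" "continuous_on S b"
  shows "continuous_on S (\<lambda>y. F' (a y) (b y))"
  by (auto intro!: continuous_intros continuous_on_compose2[OF assms(1)] assms(2,3))

lemma key_diff:
  fixes \<Gamma> \<Gamma>t U Ut :: "real \<Rightarrow> real \<Rightarrow> real"
    and F :: "'a::euclidean_space \<times> real \<Rightarrow> 'a" and F' :: "'a \<times> real \<Rightarrow> ('a \<times> real) \<Rightarrow>\<^sub>L 'a"
    and P :: "real \<Rightarrow> real \<Rightarrow> 'a" and X :: "real \<Rightarrow> 'a" and Xd :: 'a and Q R :: "real \<Rightarrow> 'a"
    and t0 :: real
  assumes t0: "0 \<le> t0"
    and dG: "\<And>y s. y \<in> {0..1} \<Longrightarrow> 0 \<le> s \<Longrightarrow> ((\<lambda>s. \<Gamma> y s) has_real_derivative \<Gamma>t y s) (at s within {0..})"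
    and cGt: "continuous_on ({0..1} \<times> {0..}) (\<lambda>(y,s). \<Gamma>t y s)"
    and cG: "continuous_on ({0..1} \<times> {0..}) (\<lambda>(y,s). \<Gamma> y s)"
    and dU: "\<And>y s. y \<in> {0..1} \<Longrightarrow> 0 \<le> s \<Longrightarrow> ((\<lambda>s. U y s) has_real_derivative Ut y s) (at s within {0..})"
    and cUt: "continuous_on ({0..1} \<times> {0..}) (\<lambda>(y,s). Ut y s)"
    and cU: "continuous_on ({0..1} \<times> {0..}) (\<lambda>(y,s). U y s)"
    and dF: "\<And>z. (F has_derivative blinfun_apply (F' z)) (at z)"
    and cF': "continuous_on UNIV F'"
    and cP: "\<And>s. 0 \<le> s \<Longrightarrow> continuous_on {0..1} (\<lambda>y. P y s)"
    and eqP: "\<And>y s. y \<in> {0..1} \<Longrightarrow> 0 \<le> s \<Longrightarrow>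
       P y s = X s + integral {0..y} (\<lambda>y'. \<Gamma> y' s *\<^sub>R F (P y' s, U y' s))"
    and dX: "(X has_vector_derivative Xd) (at t0 within {0..})"
    and cQ: "continuous_on {0..1} Q"
    and R_def: "\<And>y. R y = \<Gamma>t y t0 *\<^sub>R F (P y t0, U y t0) + \<Gamma> y t0 *\<^sub>R F' (P y t0, U y t0) (Q y, Ut y t0)"
    and eqQ: "\<And>y. y \<in> {0..1} \<Longrightarrow> Q y = Xd + integral {0..y} R"
  shows "\<forall>e>0. \<exists>d>0. \<forall>t\<ge>0. \<bar>t - t0\<bar> < d \<longrightarrow>
           (\<forall>y\<in>{0..1}. norm (P y t - P y t0 - (t - t0) *\<^sub>R Q y) \<le> e * \<bar>t - t0\<bar>)"
proof (intro allI impI)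
  fix e :: real assume e: "e > 0"
  have cFu: "continuous_on UNIV F"
    using dF by (meson continuous_at_imp_continuous_on has_derivative_continuous)
  define g where "g s y = \<Gamma> y s *\<^sub>R F (P y s, U y s)" for s y
  have cg: "continuous_on {0..1} (g s)" if "0 \<le> s" for s
    unfolding g_def
    by (intro continuous_intros slice[OF cG that] continuous_on_compose2[OF cFu] cP[OF that] slice[OF cU that]) auto
  have cR: "continuous_on {0..1} R"
    unfolding R_def[abs_def]
    by (intro continuous_intros slice[OF cG t0] slice[OF cGt t0] continuous_on_compose2[OF cFu]
        continuous_on_compose2[OF cF'] cP[OF t0] slice[OF cU t0] slice[OF cUt t0] cQ) auto
  define K where "K = (\<lambda>y. (P y t0, U y t0)) ` {0..1}"
  have Kc: "compact K" unfolding K_def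
    by (intro compact_continuous_image continuous_intros cP[OF t0] slice[OF cU t0]) auto
  obtain Mf where Mf: "\<And>k z. k \<in> K \<Longrightarrow> norm (z - k) \<le> 1 \<Longrightarrow> norm (F' z) \<le> Mf"
    using bnd_near[OF cF' Kc] by blast
  obtain MF where MF: "\<And>k z. k \<in> K \<Longrightarrow> norm (z - k) \<le> 1 \<Longrightarrow> norm (F z) \<le> MF"
    using bnd_near[OF cFu Kc] by blast
  have kK: "(P y t0, U y t0) \<in> K" if "y \<in> {0..1}" for y using that by (auto simp: K_def)
  have "norm (F' (P 0 t0, U 0 t0)) \<le> Mf" by (rule Mf[OF kK[of 0]]) auto
  hence Mf0: "0 \<le> Mf" by (meson norm_ge_zero order_trans)
  have "norm (F (P 0 t0, U 0 t0)) \<le> MF" by (rule MF[OF kK[of 0]]) auto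
  hence MF0: "0 \<le> MF" by (meson norm_ge_zero order_trans)
  obtain MG where MG: "MG \<ge> 0" "\<And>y. y \<in> {0..1} \<Longrightarrow> norm (\<Gamma> y t0) \<le> MG"
    using bnd01[OF slice[OF cG t0]] by blast
  obtain MGt where MGt: "MGt \<ge> 0" "\<And>y. y \<in> {0..1} \<Longrightarrow> norm (\<Gamma>t y t0) \<le> MGt"
    using bnd01[OF slice[OF cGt t0]] by blast
  obtain MQ where MQ: "MQ \<ge> 0" "\<And>y. y \<in> {0..1} \<Longrightarrow> norm (Q y) \<le> MQ"
    using bnd01[OF cQ] by blast
  obtain MUt where MUt: "MUt \<ge> 0" "\<And>y. y \<in> {0..1} \<Longrightarrow> norm (Ut y t0) \<le> MUt"
    using bnd01[OF slice[OF cUt t0]] by blast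
  define c where "c = 2 + MQ + MUt"
  define L where "L = MG * Mf"
  define A where "A = 2 + MF + MG * c + MG * Mf"
  define Cg where "Cg = A * (1 + L * exp L)"
  have L0: "0 \<le> L" using MG Mf0 by (simp add: L_def)
  have c2: "2 \<le> c" using MQ MUt by (simp add: c_def)
  have A2: "2 \<le> A" using MG MF0 Mf0 c2 by (simp add: A_def)
  have Cg2: "2 \<le> Cg"
  proof -
    have "1 \<le> 1 + L * exp L" using L0 by simp
    hence "A * 1 \<le> A * (1 + L * exp L)" using A2 by (intro mult_left_mono) auto
    thus ?thesis using A2 unfolding Cg_def by linarith
  qed
  define \<eta> where "\<eta> = min e 1 / (2 * Cg)"
  have \<eta>0: "0 < \<eta>" using e Cg2 by (simp add: \<eta>_def)
  have \<eta>Cg: "\<eta> * Cg \<le> min e 1 / 2" using Cg2 by (simp add: \<eta>_def)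
  have \<eta>1: "\<eta> \<le> 1"
  proof -
    have "\<eta> \<le> 1 / (2 * Cg)" unfolding \<eta>_def using Cg2 by (intro divide_right_mono) auto
    also have "\<dots> \<le> 1" using Cg2 by simp
    finally show ?thesis .
  qed
  obtain d1 where d1: "d1 > 0" and d1': "\<And>t y. 0 \<le> t \<Longrightarrow> \<bar>t - t0\<bar> < d1 \<Longrightarrow> y \<in> {0..1} \<Longrightarrow>
      \<bar>\<Gamma> y t - \<Gamma> y t0 - (t - t0) * \<Gamma>t y t0\<bar> \<le> \<eta> * \<bar>t - t0\<bar>"
    using unif_diff[OF dG cGt t0 \<eta>0] by blast
  obtain d2 where d2: "d2 > 0" and d2': "\<And>t y. 0 \<le> t \<Longrightarrow> \<bar>t - t0\<bar> < d2 \<Longrightarrow> y \<in> {0..1} \<Longrightarrow>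
      \<bar>U y t - U y t0 - (t - t0) * Ut y t0\<bar> \<le> \<eta> * \<bar>t - t0\<bar>"
    using unif_diff[OF dU cUt t0 \<eta>0] by blast
  obtain d3 where d3: "d3 > 0" and d3': "\<And>t. 0 \<le> t \<Longrightarrow> \<bar>t - t0\<bar> < d3 \<Longrightarrow>
      norm (X t - X t0 - (t - t0) *\<^sub>R Xd) \<le> \<eta> * \<bar>t - t0\<bar>"
  proof -
    from dX have "\<forall>e>0. \<exists>d>0. \<forall>y\<in>{0..}. norm (y - t0) < d \<longrightarrow> norm (X y - X t0 - (y - t0) *\<^sub>R Xd) \<le> e * norm (y - t0)"
      unfolding has_vector_derivative_def has_derivative_within_alt by blast
    then obtain d where "d > 0" "\<forall>y\<in>{0..}. norm (y - t0) < d \<longrightarrow> norm (X y - X t0 - (y - t0) *\<^sub>R Xd) \<le> \<eta> * norm (y - t0)"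
      using \<eta>0 by blast
    thus ?thesis using that[of d] by auto
  qed
  obtain dL where dL: "dL > 0" and dL': "\<And>k z. k \<in> K \<Longrightarrow> norm (z - k) < dL \<Longrightarrow>
      norm (F z - F k - F' k (z - k)) \<le> \<eta> * norm (z - k)"
    using linearize[OF dF cF' Kc \<eta>0] by blast
  define d4 where "d4 = \<eta> / (MGt * (Mf + 1) * c + 1)"
  define d5 where "d5 = min dL 1 / c"
  have "0 \<le> MGt * (Mf + 1) * c" using MGt Mf0 c2 by simp
  hence d4: "d4 > 0" using \<eta>0 unfolding d4_def by (intro divide_pos_pos) auto
  have d5: "d5 > 0" using dL c2 by (simp add: d5_def)
  show "\<exists>d>0. \<forall>t\<ge>0. \<bar>t - t0\<bar> < d \<longrightarrow>
           (\<forall>y\<in>{0..1}. norm (P y t - P y t0 - (t - t0) *\<^sub>R Q y) \<le> e * \<bar>t - t0\<bar>)"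
  proof (intro exI[of _ "min (min d1 d2) (min d3 (min d4 d5))"] conjI allI impI ballI)
    show "0 < min (min d1 d2) (min d3 (min d4 d5))" using d1 d2 d3 d4 d5 by auto
    fix t y :: real
    assume t: "0 \<le> t" and tt: "\<bar>t - t0\<bar> < min (min d1 d2) (min d3 (min d4 d5))" and y: "y \<in> {0..1}"
    define h where "h = t - t0"
    define D where "D y = P y t - P y t0 - h *\<^sub>R Q y" for y
    have hd: "\<bar>h\<bar> < d1" "\<bar>h\<bar> < d2" "\<bar>h\<bar> < d3" "\<bar>h\<bar> < d4" "\<bar>h\<bar> < d5"
      using tt by (auto simp: h_def)
    define G where "G w = g t w - g t0 w - h *\<^sub>R R w" for w
    have intg: "(g s) integrable_on {0..w}" if "0 \<le> s" "w \<in> {0..1}" for s w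
      by (rule integrable_continuous_real, rule continuous_on_subset[OF cg[OF that(1)]]) (use that in auto)
    have intR: "R integrable_on {0..w}" if "w \<in> {0..1}" for w
      by (rule integrable_continuous_real, rule continuous_on_subset[OF cR]) (use that in auto)
    have Drep: "D w = (X t - X t0 - h *\<^sub>R Xd) + integral {0..w} G" if w: "w \<in> {0..1}" for w
    proof -
      have "integral {0..w} G = integral {0..w} (g t) - integral {0..w} (g t0) - h *\<^sub>R integral {0..w} R"
      proof -
        have i1: "g t integrable_on {0..w}" "g t0 integrable_on {0..w}" "(\<lambda>w. h *\<^sub>R R w) integrable_on {0..w}"
          using intg[OF t w] intg[OF t0 w] integrable_cmul[OF intR[OF w]] by auto
        have "integral {0..w} G = integral {0..w} (\<lambda>w. g t w - g t0 w) - integral {0..w} (\<lambda>w. h *\<^sub>R R w)"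
          unfolding G_def by (rule integral_diff) (use i1 in \<open>auto intro: integrable_diff\<close>)
        also have "integral {0..w} (\<lambda>w. g t w - g t0 w) = integral {0..w} (g t) - integral {0..w} (g t0)"
          by (rule integral_diff) (use i1 in auto)
        finally show ?thesis by simp
      qed
      thus ?thesis
        using eqP[OF w t] eqP[OF w t0] eqQ[OF w]
        unfolding D_def g_def[abs_def] by (simp add: algebra_simps)
    qed
    have cD: "continuous_on {0..1} D"
      unfolding D_def by (intro continuous_intros cP t t0 cQ)
    have cG: "continuous_on {0..1} G"
      unfolding G_def by (intro continuous_intros cg t t0 cR)
    have pw: "norm (G w) \<le> \<eta> * \<bar>h\<bar> * (A - 1) + L * norm (D w)"
      if w: "w \<in> {0..1}" and Dw: "norm (D w) \<le> \<bar>h\<bar>" for w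
    proof -
      define k where "k = (P w t0, U w t0)"
      define z where "z = (P w t, U w t)"
      have kK': "k \<in> K" using kK[OF w] by (simp add: k_def)
      have dUw: "\<bar>U w t - U w t0 - h * Ut w t0\<bar> \<le> \<eta> * \<bar>h\<bar>"
        using d2'[OF t _ w] hd by (simp add: h_def)
      have "\<bar>U w t - U w t0\<bar> \<le> \<bar>h\<bar> * \<bar>Ut w t0\<bar> + \<eta> * \<bar>h\<bar>"
        using dUw abs_mult[of h "Ut w t0"] abs_triangle_ineq[of "U w t - U w t0 - h * Ut w t0" "h * Ut w t0"] by linarith
      also have "\<dots> \<le> \<bar>h\<bar> * MUt + 1 * \<bar>h\<bar>"
        using MUt(2)[OF w] \<eta>1 by (intro add_mono mult_left_mono mult_right_mono) auto
      finally have dU1: "\<bar>U w t - U w t0\<bar> \<le> \<bar>h\<bar> * (MUt + 1)" by (simp add: algebra_simps)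
      have "P w t - P w t0 = D w + h *\<^sub>R Q w" by (simp add: D_def)
      hence "norm (P w t - P w t0) \<le> norm (D w) + \<bar>h\<bar> * norm (Q w)"
        by (metis norm_scaleR norm_triangle_ineq)
      also have "\<dots> \<le> \<bar>h\<bar> + \<bar>h\<bar> * MQ" using Dw MQ(2)[OF w] by (intro add_mono mult_left_mono) auto
      finally have dP1: "norm (P w t - P w t0) \<le> \<bar>h\<bar> * (1 + MQ)" by (simp add: algebra_simps)
      have zk: "z - k = (P w t - P w t0, U w t - U w t0)" by (simp add: z_def k_def)
      have "norm (z - k) \<le> norm (P w t - P w t0) + norm (U w t - U w t0)"
        unfolding zk by (rule norm_Pair_le)
      also have "\<dots> \<le> \<bar>h\<bar> * (1 + MQ) + \<bar>h\<bar> * (MUt + 1)" using dP1 dU1 by simp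
      finally have nzk: "norm (z - k) \<le> c * \<bar>h\<bar>" by (simp add: c_def algebra_simps)
      have "c * \<bar>h\<bar> < c * d5" using hd c2 by simp
      also have "c * d5 = min dL 1" using c2 by (simp add: d5_def)
      finally have chL: "c * \<bar>h\<bar> < min dL 1" .
      have nzk1: "norm (z - k) \<le> 1" "norm (z - k) < dL" using nzk chL by auto
      have lin: "norm (F z - F k - F' k (z - k)) \<le> \<eta> * (c * \<bar>h\<bar>)"
        using dL'[OF kK' nzk1(2)] nzk \<eta>0 by (meson mult_left_mono less_imp_le order_trans)
      have nF'k: "norm (F' k) \<le> Mf" using Mf[OF kK', of k] by simp
      have nFz: "norm (F z) \<le> MF" using MF[OF kK' nzk1(1)] .
      have "norm (F z - F k) \<le> norm (F' k (z - k)) + norm (F z - F k - F' k (z - k))"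
        by (metis add.commute diff_add_cancel norm_triangle_ineq)
      also have "\<dots> \<le> Mf * (c * \<bar>h\<bar>) + 1 * (c * \<bar>h\<bar>)"
      proof (intro add_mono)
        show "norm (F' k (z - k)) \<le> Mf * (c * \<bar>h\<bar>)"
          using norm_blinfun[of "F' k" "z - k"] nF'k nzk Mf0
          by (meson mult_mono norm_ge_zero order_trans)
        show "norm (F z - F k - F' k (z - k)) \<le> 1 * (c * \<bar>h\<bar>)"
        proof -
          have "\<eta> * (c * \<bar>h\<bar>) \<le> 1 * (c * \<bar>h\<bar>)" using \<eta>1 c2 by (intro mult_right_mono) auto
          thus ?thesis using lin by linarith
        qed
      qed
      finally have nFzk: "norm (F z - F k) \<le> (Mf + 1) * c * \<bar>h\<bar>" by (simp add: algebra_simps)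
      define Bd where "Bd = F' k (D w, U w t - U w t0 - h * Ut w t0)"
      have zk2: "z - k = (D w, U w t - U w t0 - h * Ut w t0) + h *\<^sub>R (Q w, Ut w t0)"
        by (simp add: zk D_def algebra_simps)
      have F'zk: "F' k (z - k) = Bd + h *\<^sub>R F' k (Q w, Ut w t0)"
        unfolding zk2 Bd_def by (simp only: blinfun.add_right blinfun.scaleR_right)
      have Gid: "G w = (\<Gamma> w t - \<Gamma> w t0 - h * \<Gamma>t w t0) *\<^sub>R F z + (h * \<Gamma>t w t0) *\<^sub>R (F z - F k)
          + \<Gamma> w t0 *\<^sub>R (F z - F k - F' k (z - k)) + \<Gamma> w t0 *\<^sub>R Bd"
        unfolding F'zk G_def g_def R_def[of w]
        by (simp add: z_def k_def algebra_simps)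
      have T1: "norm ((\<Gamma> w t - \<Gamma> w t0 - h * \<Gamma>t w t0) *\<^sub>R F z) \<le> (\<eta> * \<bar>h\<bar>) * MF"
        using d1'[OF t _ w] hd nFz \<eta>0 by (simp add: h_def) (intro mult_mono, auto)
      have "\<bar>h\<bar> * MGt * (Mf + 1) * c \<le> \<bar>h\<bar> * (MGt * (Mf + 1) * c + 1)"
        by (simp add: algebra_simps)
      also have "\<dots> \<le> d4 * (MGt * (Mf + 1) * c + 1)"
        using hd MGt Mf0 c2 by (intro mult_right_mono) auto
      also have "\<dots> = \<eta>"
      proof -
        have "MGt * (Mf + 1) * c + 1 \<noteq> 0" using MGt Mf0 c2
          by (smt (verit) mult_nonneg_nonneg)
        thus ?thesis unfolding d4_def by simp
      qed
      finally have hsmall: "\<bar>h\<bar> * MGt * (Mf + 1) * c \<le> \<eta>" .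
      have "norm ((h * \<Gamma>t w t0) *\<^sub>R (F z - F k)) \<le> (\<bar>h\<bar> * MGt) * ((Mf + 1) * c * \<bar>h\<bar>)"
        using MGt(2)[OF w] nFzk by (simp add: abs_mult) (intro mult_mono mult_left_mono, auto)
      also have "\<dots> = (\<bar>h\<bar> * MGt * (Mf + 1) * c) * \<bar>h\<bar>" by (simp add: algebra_simps)
      also have "\<dots> \<le> \<eta> * \<bar>h\<bar>" using hsmall by (intro mult_right_mono) auto
      finally have T2: "norm ((h * \<Gamma>t w t0) *\<^sub>R (F z - F k)) \<le> \<eta> * \<bar>h\<bar>" .
      have T3: "norm (\<Gamma> w t0 *\<^sub>R (F z - F k - F' k (z - k))) \<le> MG * (\<eta> * (c * \<bar>h\<bar>))"
        using MG(2)[OF w] lin by (simp) (intro mult_mono, auto)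
      have "norm (D w, U w t - U w t0 - h * Ut w t0) \<le> norm (D w) + \<eta> * \<bar>h\<bar>"
        using norm_Pair_le[of "D w" "U w t - U w t0 - h * Ut w t0"] dUw by simp
      hence "norm Bd \<le> Mf * (norm (D w) + \<eta> * \<bar>h\<bar>)"
        unfolding Bd_def using norm_blinfun[of "F' k"] nF'k Mf0
        by (meson mult_mono norm_ge_zero order_trans)
      hence T4: "norm (\<Gamma> w t0 *\<^sub>R Bd) \<le> MG * (Mf * (norm (D w) + \<eta> * \<bar>h\<bar>))"
        using MG(2)[OF w] by (simp) (intro mult_mono, auto)
      have "norm (G w) \<le> (\<eta> * \<bar>h\<bar>) * MF + \<eta> * \<bar>h\<bar> + MG * (\<eta> * (c * \<bar>h\<bar>)) + MG * (Mf * (norm (D w) + \<eta> * \<bar>h\<bar>))"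
      proof -
        have tri: "norm (a+b+c+d) \<le> norm a + norm b + norm c + norm d" for a b c d :: 'a
          using norm_triangle_ineq[of "a+b+c" d] norm_triangle_ineq[of "a+b" c] norm_triangle_ineq[of a b] by linarith
        show ?thesis unfolding Gid using tri T1 T2 T3 T4 by smt
      qed
      also have "\<dots> = \<eta> * \<bar>h\<bar> * (A - 1) + L * norm (D w)"
        by (simp add: A_def L_def algebra_simps)
      finally show ?thesis .
    qed
    have D0: "norm (D 0) \<le> \<eta> * \<bar>h\<bar>"
    proof -
      have "D 0 = X t - X t0 - h *\<^sub>R Xd" using Drep[of 0] by simp
      thus ?thesis using d3'[OF t] hd by (simp add: h_def)
    qed
    have bound_on: "norm (D z) \<le> (\<eta> * \<bar>h\<bar> * A) * (1 + L * exp L)"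
      if b: "b \<in> {0..1}" and hb: "\<forall>z\<in>{0..b}. norm (D z) \<le> \<bar>h\<bar>" and z: "z \<in> {0..b}" for b z
    proof (rule gronwall01[where \<phi> = "\<lambda>y. norm (D y)" and b = b])
      show "0 \<le> b" "b \<le> 1" using b by auto
      show "0 \<le> L" by (rule L0)
      show "0 \<le> \<eta> * \<bar>h\<bar> * A" using \<eta>0 A2 by simp
      show "continuous_on {0..b} (\<lambda>y. norm (D y))"
        by (intro continuous_intros continuous_on_subset[OF cD]) (use b in auto)
      show "z \<in> {0..b}" by (rule z)
      fix w assume w: "w \<in> {0..b}"
      have w1: "w \<in> {0..1}" using w b by auto
      have intnD: "(\<lambda>y. norm (D y)) integrable_on {0..w}"
        by (intro integrable_continuous_real continuous_intros continuous_on_subset[OF cD]) (use w1 in auto)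
      have "norm (integral {0..w} G) \<le> integral {0..w} (\<lambda>y. \<eta> * \<bar>h\<bar> * (A - 1) + L * norm (D y))"
      proof (rule integral_norm_bound_integral)
        show "G integrable_on {0..w}"
          by (intro integrable_continuous_real continuous_on_subset[OF cG]) (use w1 in auto)
        show "(\<lambda>y. \<eta> * \<bar>h\<bar> * (A - 1) + L * norm (D y)) integrable_on {0..w}"
          using integrable_add[OF integrable_const_ivl[of "\<eta> * \<bar>h\<bar> * (A - 1)" 0 w] integrable_cmul[OF intnD, of L]] by simp
        fix y assume y: "y \<in> {0..w}"
        show "norm (G y) \<le> \<eta> * \<bar>h\<bar> * (A - 1) + L * norm (D y)"
          by (rule pw) (use y w b hb in auto)
      qed
      also have "\<dots> = \<eta> * \<bar>h\<bar> * (A - 1) * w + L * integral {0..w} (\<lambda>y. norm (D y))"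
      proof -
        have "integral {0..w} (\<lambda>y. \<eta> * \<bar>h\<bar> * (A - 1) + L * norm (D y))
            = integral {0..w} (\<lambda>y. \<eta> * \<bar>h\<bar> * (A - 1)) + integral {0..w} (\<lambda>y. L * norm (D y))"
          using integrable_cmul[OF intnD, of L] by (intro integral_add) auto
        also have "integral {0..w} (\<lambda>y. L * norm (D y)) = L * integral {0..w} (\<lambda>y. norm (D y))"
          using integral_cmul[of "{0..w}" L "\<lambda>y. norm (D y)"] by simp
        finally show ?thesis using w1 by simp
      qed
      also have "\<dots> \<le> \<eta> * \<bar>h\<bar> * (A - 1) * 1 + L * integral {0..w} (\<lambda>y. norm (D y))"
        using w1 \<eta>0 A2 L0 by (intro add_mono mult_left_mono) auto
      finally have "norm (integral {0..w} G) \<le> \<eta> * \<bar>h\<bar> * (A - 1) + L * integral {0..w} (\<lambda>y. norm (D y))"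
        by simp
      moreover have "norm (D w) \<le> norm (X t - X t0 - h *\<^sub>R Xd) + norm (integral {0..w} G)"
        using Drep[OF w1] norm_triangle_ineq by metis
      moreover have "norm (X t - X t0 - h *\<^sub>R Xd) \<le> \<eta> * \<bar>h\<bar>"
        using d3'[OF t] hd by (simp add: h_def)
      ultimately show "norm (D w) \<le> \<eta> * \<bar>h\<bar> * A + L * integral {0..w} (\<lambda>y. norm (D y))"
        by (simp add: algebra_simps)
    qed
    have CgE: "(\<eta> * \<bar>h\<bar> * A) * (1 + L * exp L) = (\<eta> * Cg) * \<bar>h\<bar>"
      by (simp add: Cg_def algebra_simps)
    have "norm (D y) \<le> e * \<bar>h\<bar>"
    proof (cases "h = 0")
      case True thus ?thesis by (simp add: D_def h_def)
    next
      case False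
      hence hpos: "0 < \<bar>h\<bar>" by simp
      have small: "(\<eta> * Cg) * \<bar>h\<bar> < \<bar>h\<bar>"
      proof -
        have "\<eta> * Cg < 1" using \<eta>Cg by linarith
        thus ?thesis using hpos by simp
      qed
      have all: "\<forall>y\<in>{0..1}. norm (D y) < \<bar>h\<bar>"
      proof (rule first_exit)
        show "continuous_on {0..1} (\<lambda>y. norm (D y))" by (intro continuous_intros cD)
        show "norm (D 0) < \<bar>h\<bar>" using D0 \<eta>1 hpos small Cg2 \<eta>0
          by (smt (verit) mult_le_cancel_right1 mult_le_cancel_left1)
        fix b assume "b \<in> {0..1}" "\<forall>y\<in>{0..b}. norm (D y) \<le> \<bar>h\<bar>"
        thus "\<forall>y\<in>{0..b}. norm (D y) < \<bar>h\<bar>"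
          using bound_on CgE small by fastforce
      qed
      have "norm (D y) \<le> (\<eta> * Cg) * \<bar>h\<bar>"
        using bound_on[of 1 y] all y CgE by (auto simp: less_imp_le)
      also have "\<dots> \<le> e * \<bar>h\<bar>"
        using \<eta>Cg e by (intro mult_right_mono) auto
      finally show ?thesis .
    qed
    thus "norm (P y t - P y t0 - (t - t0) *\<^sub>R Q y) \<le> e * \<bar>t - t0\<bar>"
      by (simp add: D_def h_def)
  qed
qed

lemma nbot01: "x \<in> {0..1} \<Longrightarrow> at x within {0..1::real} \<noteq> bot"
  using islimpt_Icc[of 0 1 x] trivial_limit_within[of x "{0..1::real}"] by auto

lemma nbot0: "0 \<le> (t::real) \<Longrightarrow> at t within {0..} \<noteq> bot"
proof -
  assume t: "0 \<le> t"
  have "at t within {t..t+1} \<noteq> bot" using islimpt_Icc[of t "t+1" t] trivial_limit_within[of t "{t..t+1}"] by auto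
  moreover have "at t within {t..t+1} \<le> at t within {0..}" using t by (intro at_le) auto
  ultimately show ?thesis by (auto simp: bot_unique)
qed

lemma mixed:
  fixes u ux ut uxt uxx :: "real \<Rightarrow> real \<Rightarrow> real" and v :: "real \<Rightarrow> real"
  assumes u_x: "\<And>x t. x \<in> {0..1} \<Longrightarrow> t \<ge> 0 \<Longrightarrow>
                ((\<lambda>y. u y t) has_real_derivative ux x t) (at x within {0..1})"
    and u_t: "\<And>x t. x \<in> {0..1} \<Longrightarrow> t \<ge> 0 \<Longrightarrow>
                ((\<lambda>s. u x s) has_real_derivative ut x t) (at t within {0..})"
    and u_xx: "\<And>x t. x \<in> {0..1} \<Longrightarrow> t \<ge> 0 \<Longrightarrow>
                ((\<lambda>y. ux y t) has_real_derivative uxx x t) (at x within {0..1})"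
    and u_xt: "\<And>x t. x \<in> {0..1} \<Longrightarrow> t \<ge> 0 \<Longrightarrow>
                ((\<lambda>s. ux x s) has_real_derivative uxt x t) (at t within {0..})"
    and ux_cont: "continuous_on ({0..1} \<times> {0..}) (\<lambda>(x,t). ux x t)"
    and uxt_cont: "continuous_on ({0..1} \<times> {0..}) (\<lambda>(x,t). uxt x t)"
    and v_d1: "\<And>a. (v has_real_derivative deriv v a) (at a)"
    and pde: "\<And>x t. x \<in> {0..1} \<Longrightarrow> t \<ge> 0 \<Longrightarrow> ut x t = v (u x t) * ux x t"
    and y: "y \<in> {0..1}" and t: "0 \<le> t"
  shows "uxt y t = deriv v (u y t) * ux y t * ux y t + v (u y t) * uxx y t"
proof -
  have rep: "ut w t = ut 0 t + integral {0..w} (\<lambda>z. uxt z t)" if w: "w \<in> {0..1}" for w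
  proof -
    have ftc: "u w s - u 0 s = integral {0..w} (\<lambda>z. ux z s)" if s: "0 \<le> s" for s
    proof -
      have "((\<lambda>z. ux z s) has_integral (u w s - u 0 s)) {0..w}"
      proof (rule fundamental_theorem_of_calculus)
        show "0 \<le> w" using w by auto
        fix z assume z: "z \<in> {0..w}"
        have "((\<lambda>y. u y s) has_real_derivative ux z s) (at z within {0..w})"
          by (rule DERIV_subset[OF u_x]) (use z w s in auto)
        thus "((\<lambda>y. u y s) has_vector_derivative ux z s) (at z within {0..w})"
          by (simp add: has_real_derivative_iff_has_vector_derivative)
      qed
      thus ?thesis by (simp add: integral_unique)
    qed
    have L: "((\<lambda>s. integral (cbox 0 w) (\<lambda>z. ux z s)) has_field_derivative integral (cbox 0 w) (\<lambda>z. uxt z t)) (at t within {0..})"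
    proof (rule leibniz_rule_field_derivative[where fx = "\<lambda>s z. uxt z s"])
      fix s z assume "s \<in> {0::real..}" "z \<in> cbox 0 w"
      thus "((\<lambda>s. ux z s) has_field_derivative uxt z s) (at s within {0..})"
        using w by (intro u_xt) auto
    next
      fix s :: real assume s: "s \<in> {0..}"
      show "(\<lambda>z. ux z s) integrable_on cbox 0 w"
        using w s by (intro integrable_continuous continuous_on_subset[OF slice[OF ux_cont]]) auto
    next
      have "continuous_on ({0..} \<times> cbox 0 w) ((\<lambda>(x,t). uxt x t) \<circ> (\<lambda>(s,z). (z,s)))"
      proof (rule continuous_on_compose)
        show "continuous_on ({0..} \<times> cbox 0 w) (\<lambda>(s, z). (z, s))"
          unfolding case_prod_beta by (intro continuous_intros)
        show "continuous_on ((\<lambda>(s, z). (z, s)) ` ({0..} \<times> cbox 0 w)) (\<lambda>(x, t). uxt x t)"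
          by (rule continuous_on_subset[OF uxt_cont]) (use w in auto)
      qed
      thus "continuous_on ({0..} \<times> cbox 0 w) (\<lambda>(s, z). uxt z s)"
        by (simp add: o_def case_prod_beta)
    qed (use t in auto)
    have L2: "((\<lambda>s. u w s - u 0 s) has_field_derivative integral {0..w} (\<lambda>z. uxt z t)) (at t within {0..})"
    proof -
      have "((\<lambda>s. integral {0..w} (\<lambda>z. ux z s)) has_field_derivative integral {0..w} (\<lambda>z. uxt z t)) (at t within {0..})"
        using L by simp
      thus ?thesis
        by (rule has_field_derivative_transform_within[OF _ zero_less_one]) (use t in \<open>auto simp: ftc\<close>)
    qed
    have L3: "((\<lambda>s. u w s - u 0 s) has_field_derivative ut w t - ut 0 t) (at t within {0..})"
      using w t by (intro derivative_intros u_t) auto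
    have "ut w t - ut 0 t = integral {0..w} (\<lambda>z. uxt z t)"
      using has_field_derivative_unique[OF L3 L2 nbot0[OF t]] .
    thus ?thesis by simp
  qed
  have d1: "((\<lambda>w. ut w t) has_real_derivative uxt y t) (at y within {0..1})"
  proof -
    have "((\<lambda>w. ut 0 t + integral {0..w} (\<lambda>z. uxt z t)) has_real_derivative uxt y t) (at y within {0..1})"
      using integral_has_real_derivative[OF slice[OF uxt_cont t] y] by (auto intro!: derivative_eq_intros)
    thus ?thesis
      by (rule has_field_derivative_transform_within[OF _ zero_less_one]) (use y in \<open>auto simp: rep[symmetric]\<close>)
  qed
  have d2: "((\<lambda>w. ut w t) has_real_derivative deriv v (u y t) * ux y t * ux y t + v (u y t) * uxx y t) (at y within {0..1})"
  proof -
    have "((\<lambda>w. v (u w t) * ux w t) has_real_derivative deriv v (u y t) * ux y t * ux y t + v (u y t) * uxx y t) (at y within {0..1})"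
      using DERIV_chain2[OF v_d1 u_x[OF y t]] u_xx[OF y t]
      by (auto intro!: derivative_eq_intros simp: algebra_simps)
    thus ?thesis
      by (rule has_field_derivative_transform_within[OF _ zero_less_one]) (use y in \<open>auto simp: pde t\<close>)
  qed
  show ?thesis using has_field_derivative_unique[OF d1 d2 nbot01[OF y]] .
qed

lemma scal_alg:
  fixes V V1 V2 b bxx y :: real assumes V: "V \<noteq> 0"
  shows "- V1 * (V*b) / V^2 - y * ((V2 * (V*b) * b + V1 * (V1*b*b + V*bxx)) / V^2 - 2 * V1 * b * V1 * (V*b) / V^3)
   = V1 * b * (1 / V - y * V1 * b / V^2) + V * (- V1 * b / V^2 - (V1 * b + y * (V2 * b * b + V1 * bxx)) / V^2 + 2 * y * V1 * b * V1 * b / V^3)"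
  using V by (simp add: field_simps power2_eq_square power3_eq_cube)

lemma vec_alg:
  fixes B Fk :: "'a::real_vector" and v G Gy w :: real
  shows "v *\<^sub>R (G *\<^sub>R B + Gy *\<^sub>R Fk) + w *\<^sub>R (G *\<^sub>R Fk) = (w * G + v * Gy) *\<^sub>R Fk + G *\<^sub>R (v *\<^sub>R B)"
  by (simp add: algebra_simps)

theorem lemma1:
  fixes f :: "real^'n \<Rightarrow> real \<Rightarrow> real^'n"
    and f' :: "(real^'n) \<times> real \<Rightarrow> ((real^'n) \<times> real) \<Rightarrow>\<^sub>L (real^'n)"
    and v :: "real \<Rightarrow> real" and vlow :: real
    and \<kappa> :: "real^'n \<Rightarrow> real"
    and \<kappa>' :: "real^'n \<Rightarrow> (real^'n) \<Rightarrow>\<^sub>L real"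
    and \<kappa>'' :: "real^'n \<Rightarrow> (real^'n) \<Rightarrow>\<^sub>L ((real^'n) \<Rightarrow>\<^sub>L real)"
    and X :: "real \<Rightarrow> real^'n"
    and u ux ut uxx uxt utx utt :: "real \<Rightarrow> real \<Rightarrow> real"
    and p :: "real \<Rightarrow> real \<Rightarrow> real^'n"
  assumes f_C1: "\<And>z. ((\<lambda>z. f (fst z) (snd z)) has_derivative blinfun_apply (f' z)) (at z)"
    and f'_cont: "continuous_on UNIV f'"
    and f0: "f 0 0 = 0"
    and v_d1: "\<And>a. (v has_real_derivative deriv v a) (at a)"
    and v_d2: "\<And>a. (deriv v has_real_derivative deriv (deriv v) a) (at a)"
    and v_d2_cont: "continuous_on UNIV (deriv (deriv v))"
    and vlow_pos: "vlow > 0" and v_lower: "\<And>a. v a \<ge> vlow"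
    and \<kappa>_d1: "\<And>z. (\<kappa> has_derivative blinfun_apply (\<kappa>' z)) (at z)"
    and \<kappa>_d2: "\<And>z. (\<kappa>' has_derivative blinfun_apply (\<kappa>'' z)) (at z)"
    and \<kappa>''_cont: "continuous_on UNIV \<kappa>''"
    and \<kappa>0: "\<kappa> 0 = 0"
    and ISS: "ISS (\<lambda>Y \<omega>. f Y (\<kappa> Y + \<omega>))"
    \<comment> \<open>u is a classical C^2 solution on [0,1] x [0,oo)\<close>
    and u_x: "\<And>x t. x \<in> {0..1} \<Longrightarrow> t \<ge> 0 \<Longrightarrow>
                ((\<lambda>y. u y t) has_real_derivative ux x t) (at x within {0..1})"
    and u_t: "\<And>x t. x \<in> {0..1} \<Longrightarrow> t \<ge> 0 \<Longrightarrow>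
                ((\<lambda>s. u x s) has_real_derivative ut x t) (at t within {0..})"
    and u_xx: "\<And>x t. x \<in> {0..1} \<Longrightarrow> t \<ge> 0 \<Longrightarrow>
                ((\<lambda>y. ux y t) has_real_derivative uxx x t) (at x within {0..1})"
    and u_xt: "\<And>x t. x \<in> {0..1} \<Longrightarrow> t \<ge> 0 \<Longrightarrow>
                ((\<lambda>s. ux x s) has_real_derivative uxt x t) (at t within {0..})"
    and u_tx: "\<And>x t. x \<in> {0..1} \<Longrightarrow> t \<ge> 0 \<Longrightarrow>
                ((\<lambda>y. ut y t) has_real_derivative utx x t) (at x within {0..1})"
    and u_tt: "\<And>x t. x \<in> {0..1} \<Longrightarrow> t \<ge> 0 \<Longrightarrow>
                ((\<lambda>s. ut x s) has_real_derivative utt x t) (at t within {0..})"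
    and u_cont: "continuous_on ({0..1} \<times> {0..}) (\<lambda>(x,t). u x t)"
    and ux_cont: "continuous_on ({0..1} \<times> {0..}) (\<lambda>(x,t). ux x t)"
    and ut_cont: "continuous_on ({0..1} \<times> {0..}) (\<lambda>(x,t). ut x t)"
    and uxx_cont: "continuous_on ({0..1} \<times> {0..}) (\<lambda>(x,t). uxx x t)"
    and uxt_cont: "continuous_on ({0..1} \<times> {0..}) (\<lambda>(x,t). uxt x t)"
    and utx_cont: "continuous_on ({0..1} \<times> {0..}) (\<lambda>(x,t). utx x t)"
    and utt_cont: "continuous_on ({0..1} \<times> {0..}) (\<lambda>(x,t). utt x t)"
    \<comment> \<open>the PDE-ODE cascade in closed loop\<close>
    and ode: "\<And>t. t \<ge> 0 \<Longrightarrow> (X has_vector_derivative f (X t) (u 0 t)) (at t within {0..})"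
    and pde: "\<And>x t. x \<in> {0..1} \<Longrightarrow> t \<ge> 0 \<Longrightarrow> ut x t = v (u x t) * ux x t"
    and bc: "\<And>t. t \<ge> 0 \<Longrightarrow> u 1 t = \<kappa> (p 1 t)"
    \<comment> \<open>feasibility condition\<close>
    and feas: "\<exists>M>0. \<forall>x\<in>{0..1}. \<forall>t\<ge>0.
                 - M < deriv v (u x t) * ux x t / v (u x t) \<and> deriv v (u x t) * ux x t / v (u x t) < 1"
    \<comment> \<open>the predictor state\<close>
    and pred: "\<And>x t. x \<in> {0..1} \<Longrightarrow> t \<ge> 0 \<Longrightarrow>
                ((\<lambda>y. Gam v (u y t) (ux y t) y *\<^sub>R f (p y t) (u y t)) has_integral (p x t - X t)) {0..x}"
  shows "(\<forall>x\<in>{0..1}. \<forall>t\<ge>0. \<exists>wx wt.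
            ((\<lambda>y. u y t - \<kappa> (p y t)) has_real_derivative wx) (at x within {0..1}) \<and>
            ((\<lambda>s. u x s - \<kappa> (p x s)) has_real_derivative wt) (at t within {0..}) \<and>
            wt = v (u x t) * wx)
       \<and> (\<forall>t\<ge>0. u 1 t - \<kappa> (p 1 t) = 0)
       \<and> (\<forall>t\<ge>0. (X has_vector_derivative f (X t) (\<kappa> (X t) + (u 0 t - \<kappa> (p 0 t)))) (at t within {0..}))"
proof -
  have vpos: "\<And>a. 0 < v a" using v_lower vlow_pos by (meson less_le_trans)
  have vne: "\<And>a. v a \<noteq> 0" using vpos by (metis less_irrefl)
  have cv: "continuous_on UNIV v"
    by (meson DERIV_isCont continuous_at_imp_continuous_on v_d1)
  have cdv: "continuous_on UNIV (deriv v)"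
    by (meson DERIV_isCont continuous_at_imp_continuous_on v_d2)
  define S where "S = {0..1::real} \<times> {0::real..}"
  have cu: "continuous_on S (\<lambda>z. u (fst z) (snd z))" using u_cont by (simp add: S_def case_prod_beta)
  have cux: "continuous_on S (\<lambda>z. ux (fst z) (snd z))" using ux_cont by (simp add: S_def case_prod_beta)
  have cut: "continuous_on S (\<lambda>z. ut (fst z) (snd z))" using ut_cont by (simp add: S_def case_prod_beta)
  have cuxt: "continuous_on S (\<lambda>z. uxt (fst z) (snd z))" using uxt_cont by (simp add: S_def case_prod_beta)
  define \<Gamma> where "\<Gamma> y s = Gam v (u y s) (ux y s) y" for y s
  define \<Gamma>t where "\<Gamma>t y s = - deriv v (u y s) * ut y s / (v (u y s))^2
      - y * ((deriv (deriv v) (u y s) * ut y s * ux y s + deriv v (u y s) * uxt y s) / (v (u y s))^2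
             - 2 * deriv v (u y s) * ux y s * deriv v (u y s) * ut y s / (v (u y s))^3)" for y s
  have cG: "continuous_on ({0..1} \<times> {0..}) (\<lambda>(y,s). \<Gamma> y s)"
    unfolding \<Gamma>_def Gam_def case_prod_beta S_def[symmetric]
    by (intro continuous_intros continuous_on_compose2[OF cv cu] continuous_on_compose2[OF cdv cu] cux)
       (auto simp: vne)
  have cGt: "continuous_on ({0..1} \<times> {0..}) (\<lambda>(y,s). \<Gamma>t y s)"
    unfolding \<Gamma>t_def case_prod_beta S_def[symmetric]
    by (intro continuous_intros continuous_on_compose2[OF cv cu] continuous_on_compose2[OF cdv cu]
        continuous_on_compose2[OF v_d2_cont cu] cux cut cuxt)
       (auto simp: vne)
  have dG: "((\<lambda>s. \<Gamma> y s) has_real_derivative \<Gamma>t y s) (at s within {0..})"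
    if y: "y \<in> {0..1}" and s: "0 \<le> s" for y s
  proof -
    note d1 = DERIV_chain2[OF v_d1 u_t[OF y s]]
    note d2 = DERIV_chain2[OF v_d2 u_t[OF y s]]
    show ?thesis unfolding \<Gamma>_def Gam_def \<Gamma>t_def
      by (rule derivative_eq_intros d1 d2 u_t[OF y s] u_xt[OF y s] refl | simp add: vne)+
         (simp add: field_simps vne eval_nat_numeral)
  qed
  define F where "F z = f (fst z) (snd z)" for z
  have cF: "continuous_on UNIV F"
    unfolding F_def using f_C1 by (meson continuous_at_imp_continuous_on has_derivative_continuous)
  define g where "g s y = \<Gamma> y s *\<^sub>R F (p y s, u y s)" for s y
  have geq: "g s = (\<lambda>y. Gam v (u y s) (ux y s) y *\<^sub>R f (p y s) (u y s))" for s
    by (simp add: fun_eq_iff g_def \<Gamma>_def F_def)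
  have pint: "p y s = X s + integral {0..y} (g s)" if y: "y \<in> {0..1}" and s: "0 \<le> s" for y s
    using integral_unique[OF pred[OF y s]] by (simp add: geq)
  have gint: "g s integrable_on {0..1}" if s: "0 \<le> s" for s
    using pred[of 1 s] s unfolding geq by (auto simp: has_integral_integrable_integral)
  have cP: "continuous_on {0..1} (\<lambda>y. p y s)" if s: "0 \<le> s" for s
  proof -
    have "continuous_on {0..1} (\<lambda>y. X s + integral {0..y} (g s))"
      by (intro continuous_intros indefinite_integral_continuous_1 gint s)
    thus ?thesis by (rule continuous_on_eq) (use pint s in auto)
  qed
  have cg: "continuous_on {0..1} (g s)" if s: "0 \<le> s" for s
    unfolding g_def
    by (intro continuous_intros slice[OF cG s] continuous_on_compose2[OF cF] cP s slice[OF u_cont s]) auto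
  have dP: "((\<lambda>y. p y s) has_vector_derivative g s y) (at y within {0..1})"
    if y: "y \<in> {0..1}" and s: "0 \<le> s" for y s
  proof -
    have "((\<lambda>y. X s + integral {0..y} (g s)) has_vector_derivative g s y) (at y within {0..1})"
      using integral_has_vector_derivative[OF cg[OF s] y] by (auto intro!: derivative_eq_intros)
    thus ?thesis
      by (rule has_vector_derivative_transform_within[OF _ zero_less_one]) (use y s pint in auto)
  qed
  define Qf where "Qf s y = v (u y s) *\<^sub>R g s y" for s y
  define Rf where "Rf s y = \<Gamma>t y s *\<^sub>R F (p y s, u y s) + \<Gamma> y s *\<^sub>R f' (p y s, u y s) (Qf s y, ut y s)" for s y
  define \<Gamma>y where "\<Gamma>y y s = - deriv v (u y s) * ux y s / (v (u y s))^2
      - (deriv v (u y s) * ux y s + y * (deriv (deriv v) (u y s) * ux y s * ux y s + deriv v (u y s) * uxx y s)) / (v (u y s))^2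
      + 2 * y * deriv v (u y s) * ux y s * deriv v (u y s) * ux y s / (v (u y s))^3" for y s
  have dGy: "((\<lambda>w. \<Gamma> w s) has_real_derivative \<Gamma>y y s) (at y within {0..1})"
    if y: "y \<in> {0..1}" and s: "0 \<le> s" for y s
  proof -
    note d1 = DERIV_chain2[OF v_d1 u_x[OF y s]]
    note d2 = DERIV_chain2[OF v_d2 u_x[OF y s]]
    show ?thesis unfolding \<Gamma>_def Gam_def \<Gamma>y_def
      by (rule derivative_eq_intros d1 d2 u_x[OF y s] u_xx[OF y s] refl | simp add: vne)+
         (simp add: field_simps vne eval_nat_numeral)
  qed
  have scal: "\<Gamma>t y s = deriv v (u y s) * ux y s * \<Gamma> y s + v (u y s) * \<Gamma>y y s"
    if y: "y \<in> {0..1}" and s: "0 \<le> s" for y s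
  proof -
    have e1: "ut y s = v (u y s) * ux y s" by (rule pde[OF y s])
    have e2: "uxt y s = deriv v (u y s) * ux y s * ux y s + v (u y s) * uxx y s"
      by (rule mixed[OF u_x u_t u_xx u_xt ux_cont uxt_cont v_d1 pde y s])
    show ?thesis unfolding \<Gamma>t_def \<Gamma>y_def \<Gamma>_def Gam_def e1 e2 by (rule scal_alg[OF vne])
  qed
  have dQ: "((Qf s) has_vector_derivative Rf s y) (at y within {0..1})"
    if y: "y \<in> {0..1}" and s: "0 \<le> s" for y s
  proof -
    have pair: "((\<lambda>w. (p w s, u w s)) has_vector_derivative (g s y, ux y s)) (at y within {0..1})"
      using dP[OF y s] u_x[OF y s]
      by (intro has_vector_derivative_Pair) (auto simp: has_real_derivative_iff_has_vector_derivative)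
    have dF: "(F has_derivative blinfun_apply (f' (p y s, u y s))) (at (p y s, u y s) within (\<lambda>w. (p w s, u w s)) ` {0..1})"
      using has_derivative_at_withinI[OF f_C1[of "(p y s, u y s)"]] by (simp add: F_def[abs_def])
    have dFy: "((\<lambda>w. F (p w s, u w s)) has_vector_derivative f' (p y s, u y s) (g s y, ux y s)) (at y within {0..1})"
      using vector_derivative_diff_chain_within[OF pair dF] by (simp add: o_def)
    have dv: "((\<lambda>w. v (u w s)) has_real_derivative deriv v (u y s) * ux y s) (at y within {0..1})"
      by (rule DERIV_chain2[OF v_d1 u_x[OF y s]])
    have "((Qf s) has_vector_derivative
        v (u y s) *\<^sub>R (\<Gamma> y s *\<^sub>R f' (p y s, u y s) (g s y, ux y s) + \<Gamma>y y s *\<^sub>R F (p y s, u y s))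
        + (deriv v (u y s) * ux y s) *\<^sub>R (\<Gamma> y s *\<^sub>R F (p y s, u y s))) (at y within {0..1})"
      unfolding Qf_def[abs_def] g_def
      by (intro has_vector_derivative_scaleR dv dGy[OF y s] dFy[unfolded g_def])
    moreover have "v (u y s) *\<^sub>R (\<Gamma> y s *\<^sub>R f' (p y s, u y s) (g s y, ux y s) + \<Gamma>y y s *\<^sub>R F (p y s, u y s))
        + (deriv v (u y s) * ux y s) *\<^sub>R (\<Gamma> y s *\<^sub>R F (p y s, u y s)) = Rf s y"
    proof -
      have "(Qf s y, ut y s) = v (u y s) *\<^sub>R (g s y, ux y s)"
        by (simp add: Qf_def pde[OF y s])
      hence "f' (p y s, u y s) (Qf s y, ut y s) = v (u y s) *\<^sub>R f' (p y s, u y s) (g s y, ux y s)"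
        by (simp only: blinfun.scaleR_right)
      thus ?thesis unfolding Rf_def scal[OF y s] by (simp only: vec_alg)
    qed
    ultimately show ?thesis by simp
  qed
  have cQ: "continuous_on {0..1} (Qf s)" if s: "0 \<le> s" for s
    unfolding Qf_def[abs_def]
    by (intro continuous_intros continuous_on_compose2[OF cv slice[OF u_cont s]] cg s) auto
  have cRf: "continuous_on {0..1} (Rf s)" if s: "0 \<le> s" for s
    unfolding Rf_def[abs_def]
    by (intro continuous_intros slice[OF cGt s] slice[OF cG s] continuous_on_compose2[OF cF]
        continuous_on_compose2[OF f'_cont] cP s slice[OF u_cont s] cQ slice[OF ut_cont s]) auto
  have p0: "p 0 s = X s" if s: "0 \<le> s" for s
    using pint[of 0 s] s by simp
  have Q0: "Qf s 0 = F (X s, u 0 s)" if s: "0 \<le> s" for s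
    using p0[OF s] vne[of "u 0 s"] by (simp add: Qf_def g_def \<Gamma>_def Gam_def)
  have eqQ: "Qf s y = F (X s, u 0 s) + integral {0..y} (Rf s)" if y: "y \<in> {0..1}" and s: "0 \<le> s" for y s
  proof -
    define Z where "Z w = Qf s w - integral {0..w} (Rf s)" for w
    have "(Z has_vector_derivative 0) (at w within {0..1})" if w: "w \<in> {0..1}" for w
    proof -
      have "(Z has_vector_derivative (Rf s w - Rf s w)) (at w within {0..1})"
        unfolding Z_def[abs_def]
        by (intro has_vector_derivative_diff dQ[OF w s] integral_has_vector_derivative[OF cRf[OF s] w])
      thus ?thesis by simp
    qed
    then obtain c where c: "\<And>w. w \<in> {0..1} \<Longrightarrow> Z w = c"
      using has_vector_derivative_zero_constant[of "{0..1::real}" Z] by auto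
    have "Z y = Z 0" using c[OF y] c[of 0] by simp
    thus ?thesis using Q0[OF s] by (simp add: Z_def algebra_simps)
  qed
  have dFz: "\<And>z. (F has_derivative blinfun_apply (f' z)) (at z)"
    using f_C1 by (simp add: F_def[abs_def])
  have pt: "((\<lambda>s. p y s) has_vector_derivative Qf t y) (at t within {0..})"
    if y: "y \<in> {0..1}" and t: "0 \<le> t" for y t
  proof -
    have eqP': "p y' s = X s + integral {0..y'} (\<lambda>y'. \<Gamma> y' s *\<^sub>R F (p y' s, u y' s))"
      if "y' \<in> {0..1}" "0 \<le> s" for y' s
    proof -
      have "g s = (\<lambda>y'. \<Gamma> y' s *\<^sub>R F (p y' s, u y' s))" by (simp add: fun_eq_iff g_def)
      thus ?thesis using pint[OF that] by simp
    qed
    have K: "\<forall>e>0. \<exists>d>0. \<forall>s\<ge>0. \<bar>s - t\<bar> < d \<longrightarrow>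
           (\<forall>y\<in>{0..1}. norm (p y s - p y t - (s - t) *\<^sub>R Qf t y) \<le> e * \<bar>s - t\<bar>)"
      by (rule key_diff[where \<Gamma>=\<Gamma> and \<Gamma>t=\<Gamma>t and U=u and Ut=ut and F=F and F'=f' and P=p and X=X
            and Xd="F (X t, u 0 t)" and Q="Qf t" and R="Rf t", OF t dG cGt cG u_t ut_cont u_cont dFz f'_cont
            cP eqP' _ cQ[OF t] _ eqQ[OF _ t]])
         (use ode[OF t] in \<open>auto simp: Rf_def F_def\<close>)
    show ?thesis
      unfolding has_vector_derivative_def has_derivative_within_alt
    proof (intro conjI allI impI bounded_linear_scaleR_left)
      fix e :: real assume e: "e > 0"
      then obtain d where d: "d > 0" "\<forall>s\<ge>0. \<bar>s - t\<bar> < d \<longrightarrow>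
           (\<forall>y\<in>{0..1}. norm (p y s - p y t - (s - t) *\<^sub>R Qf t y) \<le> e * \<bar>s - t\<bar>)"
        using K by blast
      show "\<exists>d>0. \<forall>s\<in>{0..}. norm (s - t) < d \<longrightarrow> norm (p y s - p y t - (s - t) *\<^sub>R Qf t y) \<le> e * norm (s - t)"
        using d y by (intro exI[of _ d]) auto
    qed
  qed
  show ?thesis
  proof (intro conjI ballI allI impI)
    fix x t :: real assume x: "x \<in> {0..1}" and t: "0 \<le> t"
    have k1: "(\<kappa> has_derivative blinfun_apply (\<kappa>' (p x t))) (at (p x t) within S')" for S'
      by (rule has_derivative_at_withinI[OF \<kappa>_d1])
    have wx: "((\<lambda>y. u y t - \<kappa> (p y t)) has_real_derivative ux x t - \<kappa>' (p x t) (g t x)) (at x within {0..1})"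
    proof -
      have "((\<kappa> \<circ> (\<lambda>y. p y t)) has_vector_derivative \<kappa>' (p x t) (g t x)) (at x within {0..1})"
        by (rule vector_derivative_diff_chain_within[OF dP[OF x t] k1])
      hence "((\<lambda>y. \<kappa> (p y t)) has_real_derivative \<kappa>' (p x t) (g t x)) (at x within {0..1})"
        by (simp add: o_def has_real_derivative_iff_has_vector_derivative)
      thus ?thesis using u_x[OF x t] by (auto intro!: derivative_eq_intros)
    qed
    have wt: "((\<lambda>s. u x s - \<kappa> (p x s)) has_real_derivative ut x t - \<kappa>' (p x t) (Qf t x)) (at t within {0..})"
    proof -
      have "((\<kappa> \<circ> (\<lambda>s. p x s)) has_vector_derivative \<kappa>' (p x t) (Qf t x)) (at t within {0..})"
        by (rule vector_derivative_diff_chain_within[OF pt[OF x t] k1])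
      hence "((\<lambda>s. \<kappa> (p x s)) has_real_derivative \<kappa>' (p x t) (Qf t x)) (at t within {0..})"
        by (simp add: o_def has_real_derivative_iff_has_vector_derivative)
      thus ?thesis using u_t[OF x t] by (auto intro!: derivative_eq_intros)
    qed
    have "ut x t - \<kappa>' (p x t) (Qf t x) = v (u x t) * (ux x t - \<kappa>' (p x t) (g t x))"
      by (simp add: Qf_def pde[OF x t] blinfun.scaleR_right right_diff_distrib)
    thus "\<exists>wx wt. ((\<lambda>y. u y t - \<kappa> (p y t)) has_real_derivative wx) (at x within {0..1}) \<and>
            ((\<lambda>s. u x s - \<kappa> (p x s)) has_real_derivative wt) (at t within {0..}) \<and>
            wt = v (u x t) * wx"
      using wx wt by blast
  next
    fix t :: real assume "0 \<le> t"
    thus "u 1 t - \<kappa> (p 1 t) = 0" using bc by simp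
  next
    fix t :: real assume t: "0 \<le> t"
    show "(X has_vector_derivative f (X t) (\<kappa> (X t) + (u 0 t - \<kappa> (p 0 t)))) (at t within {0..})"
      using ode[OF t] p0[OF t] by simp
  qed
qed

end
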